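(* Let $Z_0,Z_1,\dots$ be i.i.d. real random variables with $\mathbb{E}[Z_0]=\mu$ and $\mathbb{E}[|Z_0|^p]<\infty$ for some $p>1$. Define $X_1=Z_0$ and $X_{n+1}=X_n+\alpha_n(Z_n-X_n)$ for $n\ge1$, where $(\alpha_n)$ is a non-increasing sequence of positive numbers with $\sum_n\alpha_n=\infty$ and $\sum_n\alpha_n^p<\infty$. Then $X_n\to\mu$ almost surely. In particular this holds for $\alpha_n=\alpha(n+K)^{-\xi}$ with $\alpha,K>0$ and $\xi\in(1/p,1]$. *)

theory Defs
  imports "HOL-Probability.Probability"
begin

text \<open>Stochastic approximation iterate, indexed from 1 as in the paper:
  X_1 = Z_0 and X_{n+1} = X_n + a_n (Z_n - X_n) for n \<ge> 1.
  The value at index 0 is an irrelevant dummy (set to Z_0).\<close>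
primrec sa_iter :: "(nat \<Rightarrow> real) \<Rightarrow> (nat \<Rightarrow> 'a \<Rightarrow> real) \<Rightarrow> nat \<Rightarrow> 'a \<Rightarrow> real" where
  "sa_iter a Z 0 x = Z 0 x"
| "sa_iter a Z (Suc n) x =
     (if n = 0 then Z 0 x else sa_iter a Z n x + a n * (Z n x - sa_iter a Z n x))"

end

theory Submission
  imports Defs "HOL-Probability.Probability"
begin

lemma exp_quad_bound:
  fixes x c :: real
  assumes "\<bar>x\<bar> \<le> c"
  shows "exp x \<le> 1 + x + x\<^sup>2 * exp c / 2"
proof -
  obtain t where t: "\<bar>t\<bar> \<le> \<bar>x\<bar>" "exp x = (\<Sum>m<2. (x ^ m) / fact m) + (exp t / fact 2) * x ^ 2"
    using Maclaurin_exp_le[of x 2] by blast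
  have "exp x = 1 + x + exp t * x\<^sup>2 / 2" using t(2) by (simp add: numeral_2_eq_2)
  also have "exp t * x\<^sup>2 / 2 \<le> exp c * x\<^sup>2 / 2"
    using t(1) assms by (intro divide_right_mono mult_right_mono) auto
  finally show ?thesis by (simp add: algebra_simps)
qed

lemma ln_sq_bound:
  fixes y :: real
  assumes "1 \<le> y"
  shows "(ln y)\<^sup>2 \<le> 16 * sqrt y"
proof -
  have y0: "0 < y" using assms by simp
  have "ln y = 4 * ln (y powr (1/4))" using y0 by (simp add: ln_powr)
  also have "ln (y powr (1/4)) \<le> y powr (1/4) - 1" using y0 by (intro ln_le_minus_one) auto
  finally have "ln y \<le> 4 * y powr (1/4)" by simp
  moreover have "0 \<le> ln y" using assms by simp
  ultimately have "(ln y)\<^sup>2 \<le> (4 * y powr (1/4))\<^sup>2" by (intro power_mono) auto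
  also have "\<dots> = 16 * (y powr (1/4) * y powr (1/4))" by (simp add: power2_eq_square)
  also have "y powr (1/4) * y powr (1/4) = y powr (1/2)" by (simp add: powr_add[symmetric])
  also have "y powr (1/2) = sqrt y" using y0 by (simp add: powr_half_sqrt)
  finally show ?thesis .
qed

lemma sq_trunc:
  fixes y \<delta> q :: real
  assumes "0 \<le> y" "y \<le> \<delta>" "1 \<le> q" "q \<le> 2"
  shows "y\<^sup>2 \<le> \<delta> powr (2 - q) * y powr q"
proof (cases "y = 0")
  case True then show ?thesis by simp
next
  case False
  then have y0: "0 < y" using assms by simp
  have "y\<^sup>2 = y powr 2" using y0 by (simp add: powr_numeral)
  also have "\<dots> = y powr q * y powr (2 - q)" by (simp add: powr_add[symmetric])
  also have "\<dots> \<le> y powr q * \<delta> powr (2 - q)"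
    using assms y0 by (intro mult_left_mono powr_mono2) auto
  finally show ?thesis by (simp add: mult.commute)
qed

lemma tail_trunc:
  fixes y \<delta> p :: real
  assumes "0 < \<delta>" "\<delta> < y" "1 \<le> p"
  shows "y \<le> y powr p / \<delta> powr (p - 1)"
proof -
  have y0: "0 < y" using assms by simp
  have "y * \<delta> powr (p - 1) \<le> y * y powr (p - 1)"
    using assms y0 by (intro mult_left_mono powr_mono2) auto
  also have "\<dots> = y powr p"
  proof -
    have "y powr p = y powr (1 + (p - 1))" by simp
    also have "\<dots> = y powr 1 * y powr (p - 1)" by (rule powr_add)
    finally show ?thesis using y0 by simp
  qed
  finally show ?thesis using assms by (simp add: field_simps)
qed

lemma block_sum_concat:
  fixes f :: "nat \<Rightarrow> real"
  assumes s: "strict_mono s"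
  shows "(\<Sum>j<J. \<Sum>k\<in>{s j..<s (Suc j)}. f k) = (\<Sum>k\<in>{s 0..<s J}. f k)"
proof (induction J)
  case 0 then show ?case by simp
next
  case (Suc J)
  have "s 0 \<le> s J" "s J \<le> s (Suc J)" using s by (auto simp: strict_mono_less_eq)
  then show ?case using Suc by (simp add: sum.atLeastLessThan_concat)
qed

lemma block_sums_summable:
  fixes f :: "nat \<Rightarrow> real"
  assumes s: "strict_mono s" and f0: "\<And>k. 0 \<le> f k" and sf: "summable f"
  shows "summable (\<lambda>j. \<Sum>k\<in>{s j..<s (Suc j)}. f k)"
proof (rule summableI_nonneg_bounded)
  fix J
  have "(\<Sum>j<J. \<Sum>k\<in>{s j..<s (Suc j)}. f k) = (\<Sum>k\<in>{s 0..<s J}. f k)"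
    by (rule block_sum_concat[OF s])
  also have "\<dots> \<le> (\<Sum>k<s J. f k)" using f0 by (intro sum_mono2) auto
  also have "\<dots> \<le> suminf f" using f0 sf by (intro sum_le_suminf) auto
  finally show "(\<Sum>j<J. \<Sum>k\<in>{s j..<s (Suc j)}. f k) \<le> suminf f" .
qed (use f0 in \<open>auto intro: sum_nonneg\<close>)

lemma eventually_blocks:
  fixes s :: "nat \<Rightarrow> nat"
  assumes s: "strict_mono s" and ev: "eventually P sequentially"
  shows "eventually (\<lambda>j. \<forall>k\<in>{s j..<s (Suc j)}. P k) sequentially"
proof -
  obtain K where K: "\<And>k. k \<ge> K \<Longrightarrow> P k" using ev unfolding eventually_sequentially by blast
  show ?thesis unfolding eventually_sequentially
  proof (intro exI allI impI ballI)
    fix j k assume j: "j \<ge> K" and k: "k \<in> {s j..<s (Suc j)}"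
    have "j \<le> s j" using s by (rule strict_mono_imp_increasing)
    then show "P k" using j k by (intro K) auto
  qed
qed

lemma (in prob_space) chernoff_block:
  fixes U :: "nat \<Rightarrow> 'a \<Rightarrow> real" and I :: "nat set"
  assumes I: "finite I"
    and indep: "indep_vars (\<lambda>_. borel) U I"
    and rv: "\<And>k. k \<in> I \<Longrightarrow> U k \<in> borel_measurable M"
    and bnd: "\<And>k x. k \<in> I \<Longrightarrow> x \<in> space M \<Longrightarrow> \<bar>U k x\<bar> \<le> c"
    and mean: "\<And>k. k \<in> I \<Longrightarrow> expectation (U k) = 0"
    and l: "0 < l"
  shows "prob {x \<in> space M. t \<le> (\<Sum>k\<in>I. U k x)}
           \<le> exp (- l * t + l\<^sup>2 * exp (l * c) * (\<Sum>k\<in>I. expectation (\<lambda>x. (U k x)\<^sup>2)) / 2)"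
proof -
  have intU: "integrable M (U k)" if "k \<in> I" for k
    by (rule integrable_const_bound[where B=c]) (use bnd that rv in auto)
  have intU2: "integrable M (\<lambda>x. (U k x)\<^sup>2)" if "k \<in> I" for k
  proof (rule integrable_const_bound[where B="c\<^sup>2"])
    show "AE x in M. norm ((U k x)\<^sup>2) \<le> c\<^sup>2"
    proof (rule AE_I2)
      fix x assume x: "x \<in> space M"
      have "\<bar>U k x\<bar>\<^sup>2 \<le> c\<^sup>2" using bnd[OF that x] by (intro power_mono) auto
      then show "norm ((U k x)\<^sup>2) \<le> c\<^sup>2" by simp
    qed
  qed (use that rv in auto)
  have intE: "integrable M (\<lambda>x. exp (l * U k x))" if "k \<in> I" for k
    by (rule integrable_const_bound[where B="exp (l * c)"])
       (use bnd that rv l in \<open>auto intro!: mult_left_mono simp: abs_le_iff\<close>)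
  have indepE: "indep_vars (\<lambda>_. borel) (\<lambda>k x. exp (l * U k x)) I"
    by (rule indep_vars_compose2[OF indep]) auto
  have meas_sum[measurable]: "(\<lambda>x. \<Sum>k\<in>I. U k x) \<in> borel_measurable M"
    using rv by (intro borel_measurable_sum) auto
  have intS: "integrable M (\<lambda>x. exp (l * (\<Sum>k\<in>I. U k x)))"
  proof -
    have "(\<lambda>x. exp (l * (\<Sum>k\<in>I. U k x))) = (\<lambda>x. \<Prod>k\<in>I. exp (l * U k x))"
      using I by (simp add: sum_distrib_left exp_sum)
    then show ?thesis using indep_vars_integrable[OF I indepE intE] by simp
  qed
  have set_eq: "{x \<in> space M. t \<le> (\<Sum>k\<in>I. U k x)} = {x \<in> space M. exp (l * t) \<le> exp (l * (\<Sum>k\<in>I. U k x))}"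
    using l by auto
  have P1: "prob {x \<in> space M. t \<le> (\<Sum>k\<in>I. U k x)} \<le> expectation (\<lambda>x. exp (l * (\<Sum>k\<in>I. U k x))) / exp (l * t)"
    unfolding set_eq by (rule integral_Markov_inequality_measure[OF intS, where A="space M"]) auto
  have "expectation (\<lambda>x. exp (l * (\<Sum>k\<in>I. U k x))) = (\<Prod>k\<in>I. expectation (\<lambda>x. exp (l * U k x)))"
  proof -
    have "(\<lambda>x. exp (l * (\<Sum>k\<in>I. U k x))) = (\<lambda>x. \<Prod>k\<in>I. exp (l * U k x))"
      using I by (simp add: sum_distrib_left exp_sum)
    then show ?thesis using indep_vars_lebesgue_integral[OF I indepE intE] by simp
  qed
  also have "(\<Prod>k\<in>I. expectation (\<lambda>x. exp (l * U k x))) \<le> (\<Prod>k\<in>I. exp (l\<^sup>2 * exp (l * c) * expectation (\<lambda>x. (U k x)\<^sup>2) / 2))"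
  proof (rule prod_mono)
    fix k assume k: "k \<in> I"
    have "expectation (\<lambda>x. exp (l * U k x)) \<le> expectation (\<lambda>x. 1 + l * U k x + (l * U k x)\<^sup>2 * exp (l * c) / 2)"
    proof (rule integral_mono)
      show "integrable M (\<lambda>x. 1 + l * U k x + (l * U k x)\<^sup>2 * exp (l * c) / 2)"
        using intU[OF k] intU2[OF k] by (auto simp: power_mult_distrib)
      fix x assume x: "x \<in> space M"
      show "exp (l * U k x) \<le> 1 + l * U k x + (l * U k x)\<^sup>2 * exp (l * c) / 2"
        using bnd[OF k x] l by (intro exp_quad_bound) (auto simp: abs_mult intro: mult_left_mono)
    qed (use intE[OF k] in auto)
    also have "\<dots> = 1 + l\<^sup>2 * exp (l * c) * expectation (\<lambda>x. (U k x)\<^sup>2) / 2"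
      using intU[OF k] intU2[OF k] mean[OF k] by (simp add: power_mult_distrib field_simps prob_space)
    also have "\<dots> \<le> exp (l\<^sup>2 * exp (l * c) * expectation (\<lambda>x. (U k x)\<^sup>2) / 2)"
      by (rule exp_ge_add_one_self)
    finally show "0 \<le> expectation (\<lambda>x. exp (l * U k x)) \<and> expectation (\<lambda>x. exp (l * U k x)) \<le> exp (l\<^sup>2 * exp (l * c) * expectation (\<lambda>x. (U k x)\<^sup>2) / 2)"
      by auto
  qed
  also have "(\<Prod>k\<in>I. exp (l\<^sup>2 * exp (l * c) * expectation (\<lambda>x. (U k x)\<^sup>2) / 2)) = exp (l\<^sup>2 * exp (l * c) * (\<Sum>k\<in>I. expectation (\<lambda>x. (U k x)\<^sup>2)) / 2)"
    using I by (simp add: exp_sum sum_distrib_left sum_divide_distrib)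
  finally have P2: "expectation (\<lambda>x. exp (l * (\<Sum>k\<in>I. U k x))) \<le> exp (l\<^sup>2 * exp (l * c) * (\<Sum>k\<in>I. expectation (\<lambda>x. (U k x)\<^sup>2)) / 2)" .
  have "prob {x \<in> space M. t \<le> (\<Sum>k\<in>I. U k x)} \<le> exp (l\<^sup>2 * exp (l * c) * (\<Sum>k\<in>I. expectation (\<lambda>x. (U k x)\<^sup>2)) / 2) / exp (l * t)"
    using P1 P2 by (meson divide_right_mono exp_gt_zero less_imp_le order_trans)
  also have "\<dots> = exp (- l * t + l\<^sup>2 * exp (l * c) * (\<Sum>k\<in>I. expectation (\<lambda>x. (U k x)\<^sup>2)) / 2)"
    by (subst exp_diff[symmetric]) (simp add: algebra_simps)
  finally show ?thesis .
qed

lemma param_bound: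
  fixes sb p q R x0 \<delta> Dq v :: real
  assumes sb: "0 < sb" "sb \<le> 1" and q: "1 < q" "q \<le> p"
    and R: "R = p / (q - 1)" and x0: "0 < x0" and \<delta>: "\<delta> = x0 / (4 * R)"
    and Dq: "0 \<le> Dq" and v: "0 \<le> v" "v \<le> \<delta> powr (2 - q) * Dq * sb powr ((q - 1) / p)"
  shows "0 < R * ln (2 / sb powr ((q - 1) / p)) / x0 \<and>
         exp (- (R * ln (2 / sb powr ((q - 1) / p)) / x0) * x0
              + (R * ln (2 / sb powr ((q - 1) / p)) / x0)\<^sup>2
                * exp ((R * ln (2 / sb powr ((q - 1) / p)) / x0) * (2 * \<delta>)) * v / 2)
         \<le> exp ((R / x0)\<^sup>2 * 16 * (\<delta> powr (2 - q) * Dq)) * sb"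
proof -
  define t where "t = sb powr ((q - 1) / p)"
  define L where "L = ln (2 / t)"
  define l where "l = R * L / x0"
  have p0: "0 < p" using q by simp
  have R0: "0 < R" using q R by simp
  have t0: "0 < t" unfolding t_def using sb by simp
  have t1: "t \<le> 1" unfolding t_def using sb q p0 by (intro powr_le1) auto
  have L0: "0 < L" unfolding L_def using t0 t1 by simp
  have l0: "0 < l" unfolding l_def using R0 L0 x0 by simp
  have lx0: "l * x0 = R * L" unfolding l_def using x0 by simp
  have ld: "l * (2 * \<delta>) = L / 2" unfolding l_def \<delta> using x0 R0 by (simp add: field_simps)
  have expL: "exp (L / 2) = sqrt (2 / t)"
  proof -
    have "exp (L / 2) = exp (ln (2 / t) / 2)" unfolding L_def ..
    also have "\<dots> = (2 / t) powr (1 / 2)" using t0 by (simp add: powr_def)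
    also have "\<dots> = sqrt (2 / t)" using t0 by (simp add: powr_half_sqrt)
    finally show ?thesis .
  qed
  have L2: "L\<^sup>2 \<le> 16 * sqrt (2 / t)" unfolding L_def using t0 t1 by (intro ln_sq_bound) (simp add: field_simps)
  have sq: "sqrt (2 / t) * sqrt (2 / t) = 2 / t" using t0 by simp
  define G where "G = (R / x0)\<^sup>2 * 16 * (\<delta> powr (2 - q) * Dq)"
  have G0: "0 \<le> G" unfolding G_def using Dq by simp
  have trm: "l\<^sup>2 * exp (l * (2 * \<delta>)) * v / 2 \<le> G"
  proof -
    define sr where "sr = sqrt (2 / t)"
    have sr0: "0 \<le> sr" unfolding sr_def using t0 by simp
    have sq': "sr * sr = 2 / t" unfolding sr_def using sq .
    have "l\<^sup>2 * exp (l * (2 * \<delta>)) * v / 2 = (R / x0)\<^sup>2 * L\<^sup>2 * sr * v / 2"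
      unfolding ld expL sr_def[symmetric] unfolding l_def by (simp add: power_mult_distrib power_divide)
    also have "\<dots> \<le> (R / x0)\<^sup>2 * (16 * sr) * sr * (\<delta> powr (2 - q) * Dq * t) / 2"
      using L2 v sr0 unfolding t_def[symmetric] sr_def[symmetric]
      using t0 by (intro divide_right_mono mult_mono mult_left_mono) (auto simp: Dq)
    also have "\<dots> = (R / x0)\<^sup>2 * 16 * (sr * sr) * t * (\<delta> powr (2 - q) * Dq) / 2"
      by (simp add: algebra_simps)
    also have "\<dots> = G" unfolding sq' G_def using t0 by (simp add: field_simps)
    finally show ?thesis .
  qed
  have first: "exp (- (l * x0)) \<le> sb"
  proof -
    have "ln (1 / t) \<le> L" unfolding L_def using t0 by (simp add: ln_div)
    then have "exp (- (l * x0)) \<le> exp (- (R * ln (1 / t)))" unfolding lx0 using R0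
      by (simp add: mult_left_mono)
    also have "\<dots> = exp (R * ln t)" using t0 by (simp add: ln_div)
    also have "\<dots> = t powr R" using t0 by (simp add: powr_def mult.commute)
    also have "\<dots> = sb powr ((q - 1) / p * R)" unfolding t_def by (simp add: powr_powr)
    also have "(q - 1) / p * R = 1" unfolding R using q p0 by (simp add: field_simps)
    finally show ?thesis using sb by simp
  qed
  have "exp (- l * x0 + l\<^sup>2 * exp (l * (2 * \<delta>)) * v / 2) = exp (- (l * x0)) * exp (l\<^sup>2 * exp (l * (2 * \<delta>)) * v / 2)"
    by (simp add: exp_add[symmetric])
  also have "\<dots> \<le> sb * exp G"
    using first trm sb by (intro mult_mono) auto
  finally show ?thesis unfolding l_def L_def t_def G_def using l0 unfolding l_def L_def t_def
    by (simp add: mult.commute)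
qed

lemma telescope_rec:
  fixes a y e :: "nat \<Rightarrow> real"
  assumes rec: "\<And>k. s \<le> k \<Longrightarrow> e (Suc k) = (1 - a k) * e k + a k * y k"
    and "s \<le> n"
  shows "e n = e s + (\<Sum>k\<in>{s..<n}. a k * (y k - e k))"
  using assms(2)
proof (induction n rule: dec_induct)
  case base then show ?case by simp
next
  case (step n)
  have "e (Suc n) = e n + a n * (y n - e n)" using rec[OF step.hyps(1)] by (simp add: algebra_simps)
  also have "\<dots> = e s + (\<Sum>k\<in>{s..<Suc n}. a k * (y k - e k))"
    using step.IH step.hyps(1) by simp
  finally show ?case .
qed

lemma block_bound:
  fixes a y e :: "nat \<Rightarrow> real"
  assumes rec: "\<And>k. s \<le> k \<Longrightarrow> e (Suc k) = (1 - a k) * e k + a k * y k"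
    and a: "\<And>k. s \<le> k \<Longrightarrow> 0 \<le> a k"
    and m: "(\<Sum>k\<in>{s..<t}. a k) \<le> 1/4"
    and n: "s \<le> n" "n \<le> t"
  shows "\<bar>e n\<bar> \<le> 2 * (\<bar>e s\<bar> + (\<Sum>k\<in>{s..<t}. a k * \<bar>y k\<bar>))"
  using n
proof (induction n rule: less_induct)
  case (less n)
  define T where "T = (\<Sum>k\<in>{s..<t}. a k * \<bar>y k\<bar>)"
  have T0: "0 \<le> T" unfolding T_def using a by (intro sum_nonneg) auto
  have "e n = e s + (\<Sum>k\<in>{s..<n}. a k * (y k - e k))"
    using rec less.prems(1) by (rule telescope_rec[where a=a and y=y and e=e])
  hence h1: "\<bar>e n\<bar> \<le> \<bar>e s\<bar> + \<bar>\<Sum>k\<in>{s..<n}. a k * (y k - e k)\<bar>"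
    by (simp add: abs_triangle_ineq)
  have h2: "\<bar>\<Sum>k\<in>{s..<n}. a k * (y k - e k)\<bar> \<le> (\<Sum>k\<in>{s..<n}. \<bar>a k * (y k - e k)\<bar>)"
    by (rule sum_abs)
  have h3: "(\<Sum>k\<in>{s..<n}. \<bar>a k * (y k - e k)\<bar>) \<le> (\<Sum>k\<in>{s..<n}. a k * \<bar>y k\<bar> + a k * \<bar>e k\<bar>)"
  proof (rule sum_mono)
    fix k assume k: "k \<in> {s..<n}"
    have "\<bar>a k * (y k - e k)\<bar> = a k * \<bar>y k - e k\<bar>" using a[of k] k by (simp add: abs_mult)
    also have "\<dots> \<le> a k * (\<bar>y k\<bar> + \<bar>e k\<bar>)" using a[of k] k by (intro mult_left_mono) auto
    finally show "\<bar>a k * (y k - e k)\<bar> \<le> a k * \<bar>y k\<bar> + a k * \<bar>e k\<bar>" by (simp add: algebra_simps)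
  qed
  have h4: "(\<Sum>k\<in>{s..<n}. a k * \<bar>y k\<bar> + a k * \<bar>e k\<bar>) = (\<Sum>k\<in>{s..<n}. a k * \<bar>y k\<bar>) + (\<Sum>k\<in>{s..<n}. a k * \<bar>e k\<bar>)"
    by (simp add: sum.distrib)
  have h5: "(\<Sum>k\<in>{s..<n}. a k * \<bar>y k\<bar>) \<le> T"
    unfolding T_def using less.prems a by (intro sum_mono2) auto
  have h6: "(\<Sum>k\<in>{s..<n}. a k * \<bar>e k\<bar>) \<le> (\<Sum>k\<in>{s..<n}. a k * (2 * (\<bar>e s\<bar> + T)))"
  proof (rule sum_mono)
    fix k assume k: "k \<in> {s..<n}"
    have "\<bar>e k\<bar> \<le> 2 * (\<bar>e s\<bar> + T)" unfolding T_def using k less.prems by (intro less.IH) auto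
    then show "a k * \<bar>e k\<bar> \<le> a k * (2 * (\<bar>e s\<bar> + T))" using a[of k] k by (intro mult_left_mono) auto
  qed
  have h7: "(\<Sum>k\<in>{s..<n}. a k * (2 * (\<bar>e s\<bar> + T))) = (\<Sum>k\<in>{s..<n}. a k) * (2 * (\<bar>e s\<bar> + T))"
    by (simp add: sum_distrib_right)
  have "(\<Sum>k\<in>{s..<n}. a k) \<le> (\<Sum>k\<in>{s..<t}. a k)"
    using less.prems a by (intro sum_mono2) auto
  hence h8: "(\<Sum>k\<in>{s..<n}. a k) * (2 * (\<bar>e s\<bar> + T)) \<le> 1/4 * (2 * (\<bar>e s\<bar> + T))"
    using m T0 by (intro mult_right_mono) auto
  have h9: "(\<Sum>k\<in>{s..<n}. a k * \<bar>e k\<bar>) \<le> 1/4 * (2 * (\<bar>e s\<bar> + T))"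
    using h6 h7 h8 by linarith
  have h10: "\<bar>e n\<bar> \<le> \<bar>e s\<bar> + (\<Sum>k\<in>{s..<n}. a k * \<bar>y k\<bar>) + (\<Sum>k\<in>{s..<n}. a k * \<bar>e k\<bar>)"
    using h1 h2 h3 h4 by linarith
  have "\<bar>e n\<bar> \<le> 2 * (\<bar>e s\<bar> + T)"
    using h10 h5 h9 T0 abs_ge_zero[of "e s"] by argo
  then show ?case unfolding T_def .
qed

lemma block_diff:
  fixes a y e :: "nat \<Rightarrow> real"
  assumes rec: "\<And>k. s \<le> k \<Longrightarrow> e (Suc k) = (1 - a k) * e k + a k * y k"
    and a: "\<And>k. s \<le> k \<Longrightarrow> 0 \<le> a k"
    and m: "(\<Sum>k\<in>{s..<t}. a k) \<le> 1/4"
    and n: "s \<le> n" "n \<le> t"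
  shows "\<bar>e n - e s\<bar> \<le> (\<Sum>k\<in>{s..<t}. a k * \<bar>y k\<bar>)
           + (\<Sum>k\<in>{s..<t}. a k) * (2 * (\<bar>e s\<bar> + (\<Sum>k\<in>{s..<t}. a k * \<bar>y k\<bar>)))"
proof -
  define T where "T = (\<Sum>k\<in>{s..<t}. a k * \<bar>y k\<bar>)"
  define m where "m = (\<Sum>k\<in>{s..<t}. a k)"
  have "e n = e s + (\<Sum>k\<in>{s..<n}. a k * (y k - e k))"
    using rec n(1) by (rule telescope_rec[where a=a and y=y and e=e])
  hence h1: "\<bar>e n - e s\<bar> = \<bar>\<Sum>k\<in>{s..<n}. a k * (y k - e k)\<bar>"
    by simp
  have h2: "\<bar>\<Sum>k\<in>{s..<n}. a k * (y k - e k)\<bar> \<le> (\<Sum>k\<in>{s..<n}. \<bar>a k * (y k - e k)\<bar>)"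
    by (rule sum_abs)
  have h3: "(\<Sum>k\<in>{s..<n}. \<bar>a k * (y k - e k)\<bar>) \<le> (\<Sum>k\<in>{s..<n}. a k * \<bar>y k\<bar> + a k * \<bar>e k\<bar>)"
  proof (rule sum_mono)
    fix k assume k: "k \<in> {s..<n}"
    have "\<bar>a k * (y k - e k)\<bar> = a k * \<bar>y k - e k\<bar>" using a[of k] k by (simp add: abs_mult)
    also have "\<dots> \<le> a k * (\<bar>y k\<bar> + \<bar>e k\<bar>)" using a[of k] k by (intro mult_left_mono) auto
    finally show "\<bar>a k * (y k - e k)\<bar> \<le> a k * \<bar>y k\<bar> + a k * \<bar>e k\<bar>" by (simp add: algebra_simps)
  qed
  have h4: "(\<Sum>k\<in>{s..<n}. a k * \<bar>y k\<bar> + a k * \<bar>e k\<bar>) = (\<Sum>k\<in>{s..<n}. a k * \<bar>y k\<bar>) + (\<Sum>k\<in>{s..<n}. a k * \<bar>e k\<bar>)"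
    by (simp add: sum.distrib)
  have h5: "(\<Sum>k\<in>{s..<n}. a k * \<bar>y k\<bar>) \<le> T"
    unfolding T_def using n a by (intro sum_mono2) auto
  have h6: "(\<Sum>k\<in>{s..<n}. a k * \<bar>e k\<bar>) \<le> (\<Sum>k\<in>{s..<n}. a k * (2 * (\<bar>e s\<bar> + T)))"
  proof (rule sum_mono)
    fix k assume k: "k \<in> {s..<n}"
    have "\<bar>e k\<bar> \<le> 2 * (\<bar>e s\<bar> + T)" unfolding T_def using k n
      by (intro block_bound[where a=a and y=y and e=e, OF rec a m]) auto
    then show "a k * \<bar>e k\<bar> \<le> a k * (2 * (\<bar>e s\<bar> + T))" using a[of k] k by (intro mult_left_mono) auto
  qed
  have h7: "(\<Sum>k\<in>{s..<n}. a k * (2 * (\<bar>e s\<bar> + T))) = (\<Sum>k\<in>{s..<n}. a k) * (2 * (\<bar>e s\<bar> + T))"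
    by (simp add: sum_distrib_right)
  have T0: "0 \<le> T" unfolding T_def using a by (intro sum_nonneg) auto
  have "(\<Sum>k\<in>{s..<n}. a k) \<le> m"
    unfolding m_def using n a by (intro sum_mono2) auto
  hence h8: "(\<Sum>k\<in>{s..<n}. a k) * (2 * (\<bar>e s\<bar> + T)) \<le> m * (2 * (\<bar>e s\<bar> + T))"
    using T0 by (intro mult_right_mono) auto
  have "\<bar>e n - e s\<bar> \<le> T + m * (2 * (\<bar>e s\<bar> + T))"
    using h1 h2 h3 h4 h5 h6 h7 h8 by argo
  then show ?thesis unfolding T_def m_def .
qed

lemma block_step:
  fixes a y e :: "nat \<Rightarrow> real"
  assumes rec: "\<And>k. s \<le> k \<Longrightarrow> e (Suc k) = (1 - a k) * e k + a k * y k"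
    and a: "\<And>k. s \<le> k \<Longrightarrow> 0 \<le> a k"
    and m1: "\<eta> \<le> (\<Sum>k\<in>{s..<t}. a k)" and m2: "(\<Sum>k\<in>{s..<t}. a k) \<le> 2 * \<eta>"
    and eta: "\<eta> \<le> 1/8"
    and st: "s \<le> t"
  shows "\<bar>e t\<bar> \<le> (1 - \<eta>/2) * \<bar>e s\<bar> + \<bar>\<Sum>k\<in>{s..<t}. a k * y k\<bar>
           + 3 * \<eta> * (\<Sum>k\<in>{s..<t}. a k * \<bar>y k\<bar>)"
proof -
  define T where "T = (\<Sum>k\<in>{s..<t}. a k * \<bar>y k\<bar>)"
  define m where "m = (\<Sum>k\<in>{s..<t}. a k)"
  define S where "S = (\<Sum>k\<in>{s..<t}. a k * y k)"
  have T0: "0 \<le> T" unfolding T_def using a by (intro sum_nonneg) auto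
  have m0: "0 \<le> m" unfolding m_def using a by (intro sum_nonneg) auto
  have m14: "m \<le> 1/4" using m2 eta unfolding m_def by simp
  have "e t = e s + (\<Sum>k\<in>{s..<t}. a k * (y k - e k))"
    using rec st by (rule telescope_rec[where a=a and y=y and e=e])
  also have "(\<Sum>k\<in>{s..<t}. a k * (y k - e k)) = S - (\<Sum>k\<in>{s..<t}. a k * (e k - e s)) - m * e s"
    unfolding S_def m_def by (simp add: algebra_simps sum_subtractf sum_distrib_right sum_distrib_left mult.commute)
  finally have et: "e t = (1 - m) * e s + S - (\<Sum>k\<in>{s..<t}. a k * (e k - e s))"
    by (simp add: algebra_simps)
  have "\<bar>\<Sum>k\<in>{s..<t}. a k * (e k - e s)\<bar> \<le> (\<Sum>k\<in>{s..<t}. \<bar>a k * (e k - e s)\<bar>)"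
    by (rule sum_abs)
  also have "\<dots> \<le> (\<Sum>k\<in>{s..<t}. a k * (T + m * (2 * (\<bar>e s\<bar> + T))))"
  proof (rule sum_mono)
    fix k assume k: "k \<in> {s..<t}"
    have "\<bar>e k - e s\<bar> \<le> T + m * (2 * (\<bar>e s\<bar> + T))"
      unfolding T_def m_def using k m14 unfolding m_def
      by (intro block_diff[where a=a and y=y and e=e, OF rec a]) auto
    then show "\<bar>a k * (e k - e s)\<bar> \<le> a k * (T + m * (2 * (\<bar>e s\<bar> + T)))"
      using a[of k] k by (auto simp: abs_mult intro!: mult_left_mono)
  qed
  also have "\<dots> = m * (T + m * (2 * (\<bar>e s\<bar> + T)))"
    unfolding m_def by (simp add: sum_distrib_right)
  finally have R: "\<bar>\<Sum>k\<in>{s..<t}. a k * (e k - e s)\<bar> \<le> m * (T + m * (2 * (\<bar>e s\<bar> + T)))" .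
  have "\<bar>e t\<bar> \<le> \<bar>(1 - m) * e s\<bar> + \<bar>S\<bar> + \<bar>\<Sum>k\<in>{s..<t}. a k * (e k - e s)\<bar>"
    unfolding et by argo
  also have "\<bar>(1 - m) * e s\<bar> = (1 - m) * \<bar>e s\<bar>" using m14 by (simp add: abs_mult)
  finally have A: "\<bar>e t\<bar> \<le> (1 - m) * \<bar>e s\<bar> + \<bar>S\<bar> + m * (T + m * (2 * (\<bar>e s\<bar> + T)))"
    using R by argo
  have B: "(1 - m) * \<bar>e s\<bar> + m * (m * (2 * \<bar>e s\<bar>)) \<le> (1 - \<eta>/2) * \<bar>e s\<bar>"
  proof -
    have mm: "m * m \<le> m * (1/4)" using m0 m14 by (intro mult_left_mono) auto
    have "1 - m + 2 * m * m \<le> 1 - \<eta>/2" using mm m0 m14 m1 unfolding m_def[symmetric]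
      by argo
    then have "(1 - m + 2 * m * m) * \<bar>e s\<bar> \<le> (1 - \<eta>/2) * \<bar>e s\<bar>" by (intro mult_right_mono) auto
    then show ?thesis by (simp add: algebra_simps)
  qed
  have C: "m * T + m * (m * (2 * T)) \<le> 3 * \<eta> * T"
  proof -
    have mm: "m * m \<le> m * (1/4)" using m0 m14 by (intro mult_left_mono) auto
    have "m + 2 * m * m \<le> 3 * \<eta>" using mm m0 m14 m2 unfolding m_def[symmetric] by argo
    then have "(m + 2 * m * m) * T \<le> 3 * \<eta> * T" using T0 by (intro mult_right_mono) auto
    then show ?thesis by (simp add: algebra_simps)
  qed
  have "m * (T + m * (2 * (\<bar>e s\<bar> + T))) = m * (m * (2 * \<bar>e s\<bar>)) + (m * T + m * (m * (2 * T)))"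
    by (simp add: algebra_simps)
  with A B C have "\<bar>e t\<bar> \<le> (1 - \<eta>/2) * \<bar>e s\<bar> + \<bar>S\<bar> + 3 * \<eta> * T" by argo
  then show ?thesis unfolding S_def T_def .
qed


lemma contract_eventually:
  fixes u :: "nat \<Rightarrow> real"
  assumes ev: "eventually (\<lambda>j. u (Suc j) \<le> (1 - c) * u j + c * L) sequentially"
    and c: "0 < c" "c \<le> 1" and \<epsilon>: "0 < \<epsilon>"
  shows "eventually (\<lambda>j. u j \<le> L + \<epsilon>) sequentially"
proof -
  obtain J where J: "\<And>j. j \<ge> J \<Longrightarrow> u (Suc j) \<le> (1 - c) * u j + c * L"
    using ev unfolding eventually_sequentially by blast
  define v where "v j = max (u j - L) 0" for j
  have v0: "0 \<le> v j" for j unfolding v_def by simp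
  have vstep: "v (Suc j) \<le> (1 - c) * v j" if "j \<ge> J" for j
  proof -
    have "u (Suc j) - L \<le> (1 - c) * (u j - L)" using J[OF that] by (simp add: algebra_simps)
    also have "\<dots> \<le> (1 - c) * v j" using c unfolding v_def by (intro mult_left_mono) auto
    finally have "u (Suc j) - L \<le> (1 - c) * v j" .
    moreover have "0 \<le> (1 - c) * v j" using c v0[of j] by simp
    ultimately show ?thesis unfolding v_def by simp
  qed
  have vbound: "v (J + i) \<le> (1 - c) ^ i * v J" for i
  proof (induction i)
    case 0 then show ?case by simp
  next
    case (Suc i)
    have "v (J + Suc i) \<le> (1 - c) * v (J + i)" using vstep[of "J + i"] by simp
    also have "\<dots> \<le> (1 - c) * ((1 - c) ^ i * v J)" using Suc c by (intro mult_left_mono) auto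
    finally show ?case by (simp add: algebra_simps)
  qed
  have "(\<lambda>i. (1 - c) ^ i * v J) \<longlonglongrightarrow> 0 * v J"
    using c by (intro tendsto_mult LIMSEQ_power_zero) auto
  hence "eventually (\<lambda>i. (1 - c) ^ i * v J < \<epsilon>) sequentially"
    using \<epsilon> by (intro order_tendstoD) auto
  then obtain I where I: "\<And>i. i \<ge> I \<Longrightarrow> (1 - c) ^ i * v J < \<epsilon>"
    unfolding eventually_sequentially by blast
  show ?thesis unfolding eventually_sequentially
  proof (intro exI allI impI)
    fix j assume j: "j \<ge> J + I"
    have "v j = v (J + (j - J))" using j by simp
    also have "\<dots> \<le> (1 - c) ^ (j - J) * v J" by (rule vbound)
    also have "\<dots> < \<epsilon>" using j by (intro I) auto
    finally have "v j < \<epsilon>" .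
    then show "u j \<le> L + \<epsilon>" unfolding v_def by simp
  qed
qed

lemma strict_mono_locate:
  fixes s :: "nat \<Rightarrow> nat"
  assumes s: "strict_mono s" and n: "s 0 \<le> n"
  shows "\<exists>j. s j \<le> n \<and> n < s (Suc j)"
proof -
  have "Suc n \<le> s (Suc n)" by (rule strict_mono_imp_increasing[OF s])
  then have ex: "\<exists>j. n < s j" by (intro exI[of _ "Suc n"]) simp
  define j where "j = (LEAST j. n < s j)"
  have j1: "n < s j" unfolding j_def by (rule LeastI_ex[OF ex])
  have "j \<noteq> 0"
  proof
    assume "j = 0"
    then have "n < s 0" using j1 by simp
    with n show False by simp
  qed
  then obtain i where i: "j = Suc i" by (cases j) auto
  have "i < (LEAST j. n < s j)" using i unfolding j_def by simp
  then have "\<not> n < s i" by (rule not_less_Least)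
  then show ?thesis using j1 i by (intro exI[of _ i]) (simp add: not_less)
qed

lemma det_conv:
  fixes a y e :: "nat \<Rightarrow> real" and s :: "nat \<Rightarrow> nat" and \<eta> C :: real
  assumes s: "strict_mono s"
    and rec: "\<And>k. s 0 \<le> k \<Longrightarrow> e (Suc k) = (1 - a k) * e k + a k * y k"
    and a: "\<And>k. s 0 \<le> k \<Longrightarrow> 0 \<le> a k"
    and m1: "\<And>j. \<eta> \<le> (\<Sum>k\<in>{s j..<s (Suc j)}. a k)"
    and m2: "\<And>j. (\<Sum>k\<in>{s j..<s (Suc j)}. a k) \<le> 2 * \<eta>"
    and eta: "0 < \<eta>" "\<eta> \<le> 1/8" and C: "0 \<le> C"
    and S: "eventually (\<lambda>j. \<bar>\<Sum>k\<in>{s j..<s (Suc j)}. a k * y k\<bar> \<le> \<eta> * \<eta>) sequentially"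
    and T: "eventually (\<lambda>j. (\<Sum>k\<in>{s j..<s (Suc j)}. a k * \<bar>y k\<bar>) \<le> C * \<eta>) sequentially"
  shows "eventually (\<lambda>n. \<bar>e n\<bar> \<le> (6 + 14 * C) * \<eta>) sequentially"
proof -
  have smono: "s j \<le> s (Suc j)" for j using s by (simp add: strict_mono_Suc_iff less_imp_le)
  have s0le: "s 0 \<le> s j" for j using s by (simp add: strict_mono_less_eq)
  have rec': "\<And>k. s j \<le> k \<Longrightarrow> e (Suc k) = (1 - a k) * e k + a k * y k" for j
    using rec s0le[of j] by (meson le_trans)
  have a': "\<And>k. s j \<le> k \<Longrightarrow> 0 \<le> a k" for j
    using a s0le[of j] by (meson le_trans)
  define u where "u j = \<bar>e (s j)\<bar>" for j
  have step: "u (Suc j) \<le> (1 - \<eta>/2) * u j + \<bar>\<Sum>k\<in>{s j..<s (Suc j)}. a k * y k\<bar>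
           + 3 * \<eta> * (\<Sum>k\<in>{s j..<s (Suc j)}. a k * \<bar>y k\<bar>)" for j
    unfolding u_def by (rule block_step[OF rec'[of j] a'[of j] m1 m2 eta(2) smono])
  have "eventually (\<lambda>j. u (Suc j) \<le> (1 - \<eta>/2) * u j + (\<eta>/2) * (2 * (1 + 3 * C) * \<eta>)) sequentially"
    using S T
  proof eventually_elim
    case (elim j)
    have "3 * \<eta> * (\<Sum>k\<in>{s j..<s (Suc j)}. a k * \<bar>y k\<bar>) \<le> 3 * \<eta> * (C * \<eta>)"
      using elim(2) eta by (intro mult_left_mono) auto
    then show ?case using step[of j] elim(1) by (simp add: algebra_simps)
  qed
  then have U: "eventually (\<lambda>j. u j \<le> 2 * (1 + 3 * C) * \<eta> + \<eta>) sequentially"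
    using eta by (intro contract_eventually[where c="\<eta>/2"]) auto
  have "eventually (\<lambda>j. u j \<le> 2 * (1 + 3 * C) * \<eta> + \<eta> \<and>
           (\<Sum>k\<in>{s j..<s (Suc j)}. a k * \<bar>y k\<bar>) \<le> C * \<eta>) sequentially"
    using U T by eventually_elim auto
  then obtain J where J: "\<And>j. j \<ge> J \<Longrightarrow> u j \<le> 2 * (1 + 3 * C) * \<eta> + \<eta> \<and>
           (\<Sum>k\<in>{s j..<s (Suc j)}. a k * \<bar>y k\<bar>) \<le> C * \<eta>"
    unfolding eventually_sequentially by blast
  show ?thesis unfolding eventually_sequentially
  proof (intro exI allI impI)
    fix n assume n: "n \<ge> s J"
    obtain j where j: "s j \<le> n" "n < s (Suc j)" using strict_mono_locate[OF s, of n] n s0le[of J] by auto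
    have "J < Suc j" using n j(2) s by (metis le_less_trans not_less_eq strict_mono_less)
    hence jJ: "j \<ge> J" by simp
    have m14: "(\<Sum>k\<in>{s j..<s (Suc j)}. a k) \<le> 1/4" using m2[of j] eta by simp
    have "\<bar>e n\<bar> \<le> 2 * (\<bar>e (s j)\<bar> + (\<Sum>k\<in>{s j..<s (Suc j)}. a k * \<bar>y k\<bar>))"
      using j by (intro block_bound[OF rec'[of j] a'[of j] m14]) auto
    also have "\<dots> \<le> 2 * ((2 * (1 + 3 * C) * \<eta> + \<eta>) + C * \<eta>)"
      using J[OF jJ] unfolding u_def by (intro mult_left_mono add_mono) auto
    also have "\<dots> = (6 + 14 * C) * \<eta>" by (simp add: algebra_simps)
    finally show "\<bar>e n\<bar> \<le> (6 + 14 * C) * \<eta>" .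
  qed
qed

lemma block_next_ex:
  fixes a :: "nat \<Rightarrow> real"
  assumes a0: "\<And>k. N \<le> k \<Longrightarrow> 0 \<le> a k" and ns: "\<not> summable a" and i: "N \<le> i" and \<eta>: "0 < \<eta>"
  shows "\<exists>n. i < n \<and> \<eta> \<le> (\<Sum>k\<in>{i..<n}. a k)"
proof (rule ccontr)
  assume "\<not> ?thesis"
  then have lt: "\<And>n. i < n \<Longrightarrow> (\<Sum>k\<in>{i..<n}. a k) < \<eta>" by (simp add: not_le)
  have "summable (\<lambda>k. a (k + i))"
  proof (rule summableI_nonneg_bounded)
    show "0 \<le> a (k + i)" for k using a0 i by simp
    fix n
    have "(\<Sum>k<n. a (k + i)) = (\<Sum>k\<in>{i..<n + i}. a k)"
      by (rule sum.reindex_bij_witness[where i="\<lambda>k. k - i" and j="\<lambda>k. k + i"]) auto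
    also have "\<dots> \<le> \<eta>"
    proof (cases "n = 0")
      case True then show ?thesis using \<eta> by simp
    next
      case False then show ?thesis using lt[of "n + i"] by simp
    qed
    finally show "(\<Sum>k<n. a (k + i)) \<le> \<eta>" .
  qed
  then have "summable a" by (rule summable_iff_shift[THEN iffD1])
  with ns show False by simp
qed

lemma block_seq:
  fixes a :: "nat \<Rightarrow> real" and N :: nat and \<eta> :: real
  assumes a0: "\<And>k. N \<le> k \<Longrightarrow> 0 \<le> a k" and a\<eta>: "\<And>k. N \<le> k \<Longrightarrow> a k \<le> \<eta>"
    and \<eta>: "0 < \<eta>" and ns: "\<not> summable a"
  shows "\<exists>s. strict_mono s \<and> s 0 = N \<and>
           (\<forall>j. \<eta> \<le> (\<Sum>k\<in>{s j..<s (Suc j)}. a k) \<and> (\<Sum>k\<in>{s j..<s (Suc j)}. a k) \<le> 2 * \<eta>)"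
proof -
  define nxt where "nxt i = (LEAST n. i < n \<and> \<eta> \<le> (\<Sum>k\<in>{i..<n}. a k))" for i
  have nxt: "i < nxt i \<and> \<eta> \<le> (\<Sum>k\<in>{i..<nxt i}. a k) \<and> (\<Sum>k\<in>{i..<nxt i}. a k) \<le> 2 * \<eta>"
    if i: "N \<le> i" for i
  proof -
    have ex: "\<exists>n. i < n \<and> \<eta> \<le> (\<Sum>k\<in>{i..<n}. a k)" by (rule block_next_ex[OF a0 ns i \<eta>])
    have n1: "i < nxt i \<and> \<eta> \<le> (\<Sum>k\<in>{i..<nxt i}. a k)"
      unfolding nxt_def by (rule LeastI_ex[OF ex])
    have "(\<Sum>k\<in>{i..<nxt i}. a k) \<le> 2 * \<eta>"
    proof (cases "nxt i = Suc i")
      case True then show ?thesis using a\<eta>[OF i] \<eta> by simp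
    next
      case False
      then obtain m where m: "nxt i = Suc m" "i < m" using n1 by (cases "nxt i") auto
      have "m < (LEAST n. i < n \<and> \<eta> \<le> (\<Sum>k\<in>{i..<n}. a k))" using m(1) unfolding nxt_def by simp
      then have "\<not> (i < m \<and> \<eta> \<le> (\<Sum>k\<in>{i..<m}. a k))" by (rule not_less_Least)
      then have "(\<Sum>k\<in>{i..<m}. a k) < \<eta>" using m by simp
      moreover have "(\<Sum>k\<in>{i..<nxt i}. a k) = (\<Sum>k\<in>{i..<m}. a k) + a m" using m by simp
      moreover have "a m \<le> \<eta>" using a\<eta> m i by simp
      ultimately show ?thesis by simp
    qed
    with n1 show ?thesis by simp
  qed
  define s where "s = rec_nat N (\<lambda>_ i. nxt i)"
  have s0: "s 0 = N" unfolding s_def by simp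
  have sS: "s (Suc j) = nxt (s j)" for j unfolding s_def by simp
  have sN: "N \<le> s j" for j
  proof (induction j)
    case 0 then show ?case by (simp add: s0)
  next
    case (Suc j) then show ?case using nxt[OF Suc] sS[of j] by simp
  qed
  have "strict_mono s" unfolding strict_mono_Suc_iff using nxt[OF sN] sS by simp
  moreover have "\<forall>j. \<eta> \<le> (\<Sum>k\<in>{s j..<s (Suc j)}. a k) \<and> (\<Sum>k\<in>{s j..<s (Suc j)}. a k) \<le> 2 * \<eta>"
    using nxt[OF sN] sS by simp
  ultimately show ?thesis using s0 by blast
qed

lemma abs_integral_le:
  fixes f g :: "'a \<Rightarrow> real"
  assumes "integrable M f" "integrable M g" "\<And>x. x \<in> space M \<Longrightarrow> \<bar>f x\<bar> \<le> g x"
  shows "\<bar>\<integral>x. f x \<partial>M\<bar> \<le> (\<integral>x. g x \<partial>M)"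
proof -
  have "\<bar>\<integral>x. f x \<partial>M\<bar> \<le> (\<integral>x. \<bar>f x\<bar> \<partial>M)"
    using integral_norm_bound[of M f] by simp
  also have "\<dots> \<le> (\<integral>x. g x \<partial>M)"
    using assms by (intro integral_mono) auto
  finally show ?thesis .
qed

lemma powr_le_one_plus:
  fixes y q p :: real
  assumes "0 \<le> y" "0 < q" "q \<le> p"
  shows "y powr q \<le> 1 + y powr p"
proof (cases "y \<le> 1")
  case True
  then have "y powr q \<le> 1" using assms by (intro powr_le1) auto
  then show ?thesis by (simp add: add_increasing2)
next
  case False
  then have "y powr q \<le> y powr p" using assms by (intro powr_mono) auto
  then show ?thesis by simp
qed

context prob_space
begin

lemma ident_integrable:
  fixes V :: "nat \<Rightarrow> 'a \<Rightarrow> real" and g :: "real \<Rightarrow> real"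
  assumes rv: "\<And>k. V k \<in> borel_measurable M"
    and ident: "\<And>k. distr M borel (V k) = distr M borel (V 0)"
    and g: "g \<in> borel_measurable borel"
  shows "integrable M (\<lambda>x. g (V k x)) \<longleftrightarrow> integrable M (\<lambda>x. g (V 0 x))"
  using integrable_distr_eq[OF rv[of k] g] integrable_distr_eq[OF rv[of 0] g] ident[of k] by simp

lemma ident_integral:
  fixes V :: "nat \<Rightarrow> 'a \<Rightarrow> real" and g :: "real \<Rightarrow> real"
  assumes rv: "\<And>k. V k \<in> borel_measurable M"
    and ident: "\<And>k. distr M borel (V k) = distr M borel (V 0)"
    and g: "g \<in> borel_measurable borel"
  shows "(\<integral>x. g (V k x) \<partial>M) = (\<integral>x. g (V 0 x) \<partial>M)"
  using integral_distr[OF rv[of k] g] integral_distr[OF rv[of 0] g] ident[of k] by simp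

lemma trunc_ev:
  fixes V :: "nat \<Rightarrow> 'a \<Rightarrow> real" and a :: "nat \<Rightarrow> real" and p \<delta> :: real
  assumes rv[measurable]: "\<And>k. V k \<in> borel_measurable M"
    and ident: "\<And>k. distr M borel (V k) = distr M borel (V 0)"
    and p: "0 < p"
    and intp: "integrable M (\<lambda>x. \<bar>V 0 x\<bar> powr p)"
    and a0: "\<And>k. 0 \<le> a k"
    and sum: "summable (\<lambda>k. a k powr p)"
    and \<delta>: "0 < \<delta>"
  shows "AE x in M. eventually (\<lambda>k. a k * \<bar>V k x\<bar> \<le> \<delta>) sequentially"
proof -
  define Ep where "Ep = expectation (\<lambda>x. \<bar>V 0 x\<bar> powr p)"
  define A where "A k = {x \<in> space M. \<delta> < a k * \<bar>V k x\<bar>}" for k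
  have Asets[measurable]: "A k \<in> sets M" for k unfolding A_def by measurable
  have intk: "integrable M (\<lambda>x. \<bar>V k x\<bar> powr p)" for k
    using ident_integrable[where V=V, OF rv ident, of "\<lambda>v. \<bar>v\<bar> powr p" k] intp by simp
  have Ek: "expectation (\<lambda>x. \<bar>V k x\<bar> powr p) = Ep" for k
    unfolding Ep_def using ident_integral[where V=V, OF rv ident, of "\<lambda>v. \<bar>v\<bar> powr p" k] by simp
  have bound: "measure M (A k) \<le> a k powr p * Ep / \<delta> powr p" for k
  proof -
    have "A k \<subseteq> {x \<in> space M. \<delta> powr p \<le> a k powr p * \<bar>V k x\<bar> powr p}"
    proof
      fix x assume "x \<in> A k"
      then have x: "x \<in> space M" "\<delta> < a k * \<bar>V k x\<bar>" unfolding A_def by auto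
      have "\<delta> powr p \<le> (a k * \<bar>V k x\<bar>) powr p" using x \<delta> p by (intro powr_mono2) auto
      also have "\<dots> = a k powr p * \<bar>V k x\<bar> powr p" using a0[of k] by (simp add: powr_mult)
      finally show "x \<in> {x \<in> space M. \<delta> powr p \<le> a k powr p * \<bar>V k x\<bar> powr p}" using x by auto
    qed
    then have "measure M (A k) \<le> measure M {x \<in> space M. \<delta> powr p \<le> a k powr p * \<bar>V k x\<bar> powr p}"
      by (intro finite_measure_mono) auto
    also have "\<dots> \<le> expectation (\<lambda>x. a k powr p * \<bar>V k x\<bar> powr p) / \<delta> powr p"
      using intk[of k] \<delta> by (intro integral_Markov_inequality_measure[where A="space M"]) auto
    also have "expectation (\<lambda>x. a k powr p * \<bar>V k x\<bar> powr p) = a k powr p * Ep"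
      using Ek[of k] by simp
    finally show ?thesis .
  qed
  have summ: "summable (\<lambda>k. measure M (A k))"
  proof (rule summable_comparison_test')
    show "summable (\<lambda>k. a k powr p * Ep / \<delta> powr p)"
      using sum by (intro summable_divide summable_mult2)
    show "norm (measure M (A k)) \<le> a k powr p * Ep / \<delta> powr p" for k
      using bound[of k] by simp
  qed
  have "AE x in M. eventually (\<lambda>k. x \<in> space M - A k) sequentially"
    by (rule borel_cantelli_AE1) (use summ in \<open>auto simp: emeasure_eq_measure\<close>)
  with AE_space show ?thesis
  proof eventually_elim
    case (elim x)
    show "eventually (\<lambda>k. a k * \<bar>V k x\<bar> \<le> \<delta>) sequentially"
      using elim(2) by eventually_elim (use elim(1) in \<open>auto simp: A_def not_less\<close>)
  qed
qed


lemma block_sums_small: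
  fixes V :: "nat \<Rightarrow> 'a \<Rightarrow> real" and a :: "nat \<Rightarrow> real" and s :: "nat \<Rightarrow> nat" and p \<epsilon> :: real
  assumes rv[measurable]: "\<And>k. V k \<in> borel_measurable M"
    and indep: "indep_vars (\<lambda>_. borel) V UNIV"
    and ident: "\<And>k. distr M borel (V k) = distr M borel (V 0)"
    and p: "1 < p"
    and intp: "integrable M (\<lambda>x. \<bar>V 0 x\<bar> powr p)"
    and int0: "integrable M (V 0)"
    and mean: "expectation (V 0) = 0"
    and a0: "\<And>k. 0 \<le> a k" and a1: "\<And>k. a k \<le> 1"
    and sum: "summable (\<lambda>k. a k powr p)"
    and s: "strict_mono s"
    and mass: "\<And>j. (\<Sum>k\<in>{s j..<s (Suc j)}. a k) \<le> 1"
    and \<epsilon>: "0 < \<epsilon>"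
  shows "AE x in M. eventually (\<lambda>j. \<bar>\<Sum>k\<in>{s j..<s (Suc j)}. a k * V k x\<bar> \<le> \<epsilon>) sequentially"
proof -
  define q where "q = min p 2"
  have q1: "1 < q" "q \<le> 2" "q \<le> p" using p by (auto simp: q_def)
  define R where "R = p / (q - 1)"
  have R0: "0 < R" using p q1 by (simp add: R_def)
  define x0 where "x0 = \<epsilon> / 4"
  have x00: "0 < x0" using \<epsilon> by (simp add: x0_def)
  define \<delta> where "\<delta> = x0 / (4 * R)"
  have \<delta>0: "0 < \<delta>" using x00 R0 by (simp add: \<delta>_def)
  define Ep where "Ep = expectation (\<lambda>x. \<bar>V 0 x\<bar> powr p)"
  define Dq where "Dq = expectation (\<lambda>x. \<bar>V 0 x\<bar> powr q)"
  define B where "B j = {s j..<s (Suc j)}" for j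
  define sb where "sb j = (\<Sum>k\<in>B j. a k powr p)" for j
  define T where "T k x = (if a k * \<bar>V k x\<bar> \<le> \<delta> then V k x else 0)" for k x
  define b where "b k = expectation (T k)" for k
  define U where "U k x = a k * (T k x - b k)" for k x
  have finB: "finite (B j)" for j unfolding B_def by simp
  have Ep0: "0 \<le> Ep" unfolding Ep_def by (intro integral_nonneg_AE) auto
  have Dq0: "0 \<le> Dq" unfolding Dq_def by (intro integral_nonneg_AE) auto
  have rvT[measurable]: "T k \<in> borel_measurable M" for k unfolding T_def by measurable
  have rvU[measurable]: "U k \<in> borel_measurable M" for k unfolding U_def by measurable
  have intV: "integrable M (V k)" for k
    using ident_integrable[where V=V, OF rv ident, of "\<lambda>v. v" k] int0 by simp
  have meanV: "expectation (V k) = 0" for k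
    using ident_integral[where V=V, OF rv ident, of "\<lambda>v. v" k] mean by simp
  have intp_k: "integrable M (\<lambda>x. \<bar>V k x\<bar> powr p)" for k
    using ident_integrable[where V=V, OF rv ident, of "\<lambda>v. \<bar>v\<bar> powr p" k] intp by simp
  have Ep_k: "expectation (\<lambda>x. \<bar>V k x\<bar> powr p) = Ep" for k
    unfolding Ep_def using ident_integral[where V=V, OF rv ident, of "\<lambda>v. \<bar>v\<bar> powr p" k] by simp
  have intq0: "integrable M (\<lambda>x. \<bar>V 0 x\<bar> powr q)"
  proof -
    have i1: "integrable M (\<lambda>x. 1 + \<bar>V 0 x\<bar> powr p)" using intp by simp
    have i2: "AE x in M. norm (\<bar>V 0 x\<bar> powr q) \<le> norm (1 + \<bar>V 0 x\<bar> powr p)"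
      using q1 by (intro AE_I2) (auto intro: powr_le_one_plus)
    have i3: "(\<lambda>x. \<bar>V 0 x\<bar> powr q) \<in> borel_measurable M" by measurable
    show ?thesis by (rule Bochner_Integration.integrable_bound[OF i1 i3 i2])
  qed
  have intq_k: "integrable M (\<lambda>x. \<bar>V k x\<bar> powr q)" for k
    using ident_integrable[where V=V, OF rv ident, of "\<lambda>v. \<bar>v\<bar> powr q" k] intq0 by simp
  have Dq_k: "expectation (\<lambda>x. \<bar>V k x\<bar> powr q) = Dq" for k
    unfolding Dq_def using ident_integral[where V=V, OF rv ident, of "\<lambda>v. \<bar>v\<bar> powr q" k] by simp
  have intT: "integrable M (T k)" for k
    by (rule Bochner_Integration.integrable_bound[OF intV[of k]]) (auto simp: T_def)
  have aT: "\<bar>a k * T k x\<bar> \<le> \<delta>" for k x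
    using a0[of k] \<delta>0 by (auto simp: T_def abs_mult)
  have ab: "\<bar>a k * b k\<bar> \<le> \<delta>" for k
  proof -
    have "a k * b k = expectation (\<lambda>x. a k * T k x)" unfolding b_def by simp
    also have "\<bar>\<dots>\<bar> \<le> expectation (\<lambda>x. \<delta>)"
      using intT[of k] aT[of k] by (intro abs_integral_le) auto
    finally show ?thesis by (simp add: prob_space)
  qed
  have bias: "\<bar>a k * b k\<bar> \<le> a k powr p * Ep / \<delta> powr (p - 1)" for k
  proof -
    have "a k * b k = - expectation (\<lambda>x. a k * (V k x - T k x))"
      unfolding b_def using intV[of k] intT[of k] meanV[of k] by simp
    hence "\<bar>a k * b k\<bar> = \<bar>expectation (\<lambda>x. a k * (V k x - T k x))\<bar>" by simp
    also have "\<dots> \<le> expectation (\<lambda>x. a k powr p * \<bar>V k x\<bar> powr p / \<delta> powr (p - 1))"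
    proof (rule abs_integral_le)
      show "integrable M (\<lambda>x. a k * (V k x - T k x))" using intV[of k] intT[of k] by simp
      show "integrable M (\<lambda>x. a k powr p * \<bar>V k x\<bar> powr p / \<delta> powr (p - 1))" using intp_k[of k] by simp
      fix x assume x: "x \<in> space M"
      show "\<bar>a k * (V k x - T k x)\<bar> \<le> a k powr p * \<bar>V k x\<bar> powr p / \<delta> powr (p - 1)"
      proof (cases "a k * \<bar>V k x\<bar> \<le> \<delta>")
        case True then show ?thesis by (simp add: T_def)
      next
        case False
        then have "a k * \<bar>V k x\<bar> \<le> (a k * \<bar>V k x\<bar>) powr p / \<delta> powr (p - 1)"
          using \<delta>0 p by (intro tail_trunc) auto
        also have "(a k * \<bar>V k x\<bar>) powr p = a k powr p * \<bar>V k x\<bar> powr p"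
          using a0[of k] by (simp add: powr_mult)
        finally show ?thesis using False a0[of k] by (simp add: T_def abs_mult)
      qed
    qed
    also have "\<dots> = a k powr p * Ep / \<delta> powr (p - 1)" using Ep_k[of k] by simp
    finally show ?thesis .
  qed
  have sb0: "0 \<le> sb j" for j unfolding sb_def by (intro sum_nonneg) auto
  have sb_lim: "sb \<longlonglongrightarrow> 0"
    unfolding sb_def B_def by (rule summable_LIMSEQ_zero[OF block_sums_summable[OF s _ sum]]) auto
  have bias_ev: "eventually (\<lambda>j. \<bar>\<Sum>k\<in>B j. a k * b k\<bar> \<le> x0) sequentially"
  proof -
    have "(\<lambda>j. Ep / \<delta> powr (p - 1) * sb j) \<longlonglongrightarrow> Ep / \<delta> powr (p - 1) * 0"
      by (intro tendsto_mult tendsto_const sb_lim)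
    then have "eventually (\<lambda>j. Ep / \<delta> powr (p - 1) * sb j < x0) sequentially"
      using x00 by (intro order_tendstoD) auto
    then show ?thesis
    proof eventually_elim
      case (elim j)
      have "\<bar>\<Sum>k\<in>B j. a k * b k\<bar> \<le> (\<Sum>k\<in>B j. \<bar>a k * b k\<bar>)" by (rule sum_abs)
      also have "\<dots> \<le> (\<Sum>k\<in>B j. a k powr p * Ep / \<delta> powr (p - 1))" by (intro sum_mono bias)
      also have "\<dots> = Ep / \<delta> powr (p - 1) * sb j" unfolding sb_def by (simp add: sum_distrib_left sum_divide_distrib algebra_simps)
      finally show ?case using elim by simp
    qed
  qed
  have bndU: "\<bar>U k x\<bar> \<le> 2 * \<delta>" for k x
  proof -
    have "\<bar>U k x\<bar> = \<bar>a k * T k x - a k * b k\<bar>" unfolding U_def by (simp add: algebra_simps)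
    also have "\<dots> \<le> \<bar>a k * T k x\<bar> + \<bar>a k * b k\<bar>" by (rule abs_triangle_ineq4)
    also have "\<dots> \<le> 2 * \<delta>" using aT[of k x] ab[of k] by simp
    finally show ?thesis .
  qed
  have meanU: "expectation (U k) = 0" for k
    unfolding U_def b_def using intT[of k] by (simp add: prob_space)
  have EU2: "expectation (\<lambda>x. (U k x)\<^sup>2) \<le> \<delta> powr (2 - q) * a k powr q * Dq" for k
  proof -
    have intaT2: "integrable M (\<lambda>x. (a k * T k x)\<^sup>2)"
    proof (rule Bochner_Integration.integrable_bound[OF integrable_const[of "\<delta>\<^sup>2"]])
      show "AE x in M. norm ((a k * T k x)\<^sup>2) \<le> norm (\<delta>\<^sup>2)"
      proof (rule AE_I2)
        fix x
        have "\<bar>a k * T k x\<bar>\<^sup>2 \<le> \<delta>\<^sup>2" using aT[of k x] by (intro power_mono) auto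
        then show "norm ((a k * T k x)\<^sup>2) \<le> norm (\<delta>\<^sup>2)" by simp
      qed
    qed measurable
    have EaT: "expectation (\<lambda>x. a k * T k x) = a k * b k" unfolding b_def by simp
    have "(\<lambda>x. (U k x)\<^sup>2) = (\<lambda>x. (a k * T k x)\<^sup>2 - 2 * (a k * b k) * (a k * T k x) + (a k * b k)\<^sup>2)"
      unfolding U_def by (simp add: power2_eq_square algebra_simps)
    then have "expectation (\<lambda>x. (U k x)\<^sup>2) = expectation (\<lambda>x. (a k * T k x)\<^sup>2) - (a k * b k)\<^sup>2"
      using intaT2 intT[of k] EaT by (simp add: prob_space power2_eq_square b_def)
    also have "\<dots> \<le> expectation (\<lambda>x. (a k * T k x)\<^sup>2)" by simp
    also have "\<dots> \<le> expectation (\<lambda>x. \<delta> powr (2 - q) * a k powr q * \<bar>V k x\<bar> powr q)"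
    proof (rule integral_mono)
      show "integrable M (\<lambda>x. \<delta> powr (2 - q) * a k powr q * \<bar>V k x\<bar> powr q)"
        using intq_k[of k] by simp
      fix x
      show "(a k * T k x)\<^sup>2 \<le> \<delta> powr (2 - q) * a k powr q * \<bar>V k x\<bar> powr q"
      proof (cases "a k * \<bar>V k x\<bar> \<le> \<delta>")
        case True
        have "(a k * T k x)\<^sup>2 = (a k * \<bar>V k x\<bar>)\<^sup>2" using True by (simp add: T_def power_mult_distrib)
        also have "\<dots> \<le> \<delta> powr (2 - q) * (a k * \<bar>V k x\<bar>) powr q"
          using True a0[of k] q1 by (intro sq_trunc) auto
        also have "(a k * \<bar>V k x\<bar>) powr q = a k powr q * \<bar>V k x\<bar> powr q"
          using a0[of k] by (simp add: powr_mult)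
        finally show ?thesis by (simp add: mult.assoc)
      next
        case False then show ?thesis by (simp add: T_def)
      qed
    qed (use intaT2 in auto)
    also have "\<dots> = \<delta> powr (2 - q) * a k powr q * Dq" using Dq_k[of k] by simp
    finally show ?thesis .
  qed
  define Y where "Y k v = a k * ((if a k * \<bar>v\<bar> \<le> \<delta> then v else 0) - b k)" for k v
  have UY: "U k x = Y k (V k x)" for k x unfolding U_def Y_def T_def by simp
  have indepU: "indep_vars (\<lambda>_. borel) U UNIV"
  proof -
    have "indep_vars (\<lambda>_. borel) (\<lambda>k x. Y k (V k x)) UNIV"
      by (rule indep_vars_compose2[OF indep]) (simp add: Y_def)
    then show ?thesis by (simp add: UY[abs_def])
  qed
  have indepU': "indep_vars (\<lambda>_. borel) (\<lambda>k x. - U k x) UNIV"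
  proof -
    have "indep_vars (\<lambda>_. borel) (\<lambda>k x. - Y k (V k x)) UNIV"
      by (rule indep_vars_compose2[OF indep]) (simp add: Y_def)
    then show ?thesis by (simp add: UY[abs_def])
  qed
  define G where "G = (R / x0)\<^sup>2 * 16 * (\<delta> powr (2 - q) * Dq)"
  have apa: "a k powr p \<le> a k" for k
  proof (cases "a k = 0")
    case False then show ?thesis using a0[of k] a1[of k] p by (intro powr_le_one_le) auto
  qed simp
  have sb1: "sb j \<le> 1" for j
  proof -
    have "sb j \<le> (\<Sum>k\<in>B j. a k)" unfolding sb_def by (intro sum_mono apa)
    also have "\<dots> \<le> 1" using mass[of j] unfolding B_def .
    finally show ?thesis .
  qed
  have gen: "prob {x \<in> space M. x0 \<le> (\<Sum>k\<in>B j. W k x)} \<le> exp G * sb j"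
    if W1: "indep_vars (\<lambda>_. borel) W UNIV" and W2: "\<And>k. W k \<in> borel_measurable M"
      and W3: "\<And>k x. \<bar>W k x\<bar> \<le> 2 * \<delta>" and W4: "\<And>k. expectation (W k) = 0"
      and W5: "\<And>k. expectation (\<lambda>x. (W k x)\<^sup>2) \<le> \<delta> powr (2 - q) * a k powr q * Dq"
      and W6: "\<And>k x. a k = 0 \<Longrightarrow> W k x = 0"
    for W j
  proof (cases "sb j = 0")
    case True
    have "\<forall>k\<in>B j. a k powr p = 0" using True finB[of j] unfolding sb_def
      by (subst sum_nonneg_eq_0_iff[symmetric]) auto
    then have "\<forall>k\<in>B j. a k = 0" by simp
    then have E: "{x \<in> space M. x0 \<le> (\<Sum>k\<in>B j. W k x)} = {}" using W6 x00 by auto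
    show ?thesis unfolding E using True by simp
  next
    case False
    then have sbp: "0 < sb j" using sb0[of j] by simp
    define t where "t = sb j powr ((q - 1) / p)"
    have t0: "0 \<le> t" unfolding t_def by simp
    define v where "v = (\<Sum>k\<in>B j. expectation (\<lambda>x. (W k x)\<^sup>2))"
    have v0: "0 \<le> v" unfolding v_def by (intro sum_nonneg integral_nonneg_AE) auto
    have aq: "a k powr q \<le> a k * t" if k: "k \<in> B j" for k
    proof (cases "a k = 0")
      case False
      then have ak: "0 < a k" using a0[of k] by simp
      have "a k powr q = a k powr 1 * a k powr (q - 1)" by (subst powr_add[symmetric]) simp
      also have "\<dots> = a k * a k powr (q - 1)" using ak by simp
      also have "a k powr (q - 1) = (a k powr p) powr ((q - 1) / p)"
        using p by (simp add: powr_powr)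
      also have "\<dots> \<le> t" unfolding t_def sb_def using q1 p k finB[of j]
        by (intro powr_mono2 member_le_sum) auto
      finally show ?thesis using ak by (simp add: mult_left_mono)
    qed simp
    have sumq: "(\<Sum>k\<in>B j. a k powr q) \<le> t"
    proof -
      have "(\<Sum>k\<in>B j. a k powr q) \<le> (\<Sum>k\<in>B j. a k * t)" by (intro sum_mono aq)
      also have "\<dots> = (\<Sum>k\<in>B j. a k) * t" by (simp add: sum_distrib_right)
      also have "\<dots> \<le> 1 * t" using mass[of j] t0 unfolding B_def by (intro mult_right_mono) auto
      finally show ?thesis by simp
    qed
    have vb: "v \<le> \<delta> powr (2 - q) * Dq * t"
    proof -
      have "v \<le> (\<Sum>k\<in>B j. \<delta> powr (2 - q) * a k powr q * Dq)" unfolding v_def by (intro sum_mono W5)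
      also have "\<dots> = \<delta> powr (2 - q) * Dq * (\<Sum>k\<in>B j. a k powr q)"
        by (simp add: sum_distrib_left algebra_simps)
      also have "\<dots> \<le> \<delta> powr (2 - q) * Dq * t" using sumq Dq0 by (intro mult_left_mono) auto
      finally show ?thesis .
    qed
    define l where "l = R * ln (2 / sb j powr ((q - 1) / p)) / x0"
    have PB: "0 < l \<and> exp (- l * x0 + l\<^sup>2 * exp (l * (2 * \<delta>)) * v / 2) \<le> exp G * sb j"
      unfolding l_def G_def
      by (rule param_bound[OF sbp sb1 q1(1) q1(3) R_def x00 \<delta>_def Dq0 v0 vb[unfolded t_def]])
    have "prob {x \<in> space M. x0 \<le> (\<Sum>k\<in>B j. W k x)} \<le> exp (- l * x0 + l\<^sup>2 * exp (l * (2 * \<delta>)) * v / 2)"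
      unfolding v_def
    proof (rule chernoff_block[OF finB])
      show "indep_vars (\<lambda>_. borel) W (B j)" using W1 by (rule indep_vars_subset) auto
    qed (use W2 W3 W4 PB in auto)
    with PB show ?thesis by linarith
  qed
  have genU: "prob {x \<in> space M. x0 \<le> (\<Sum>k\<in>B j. U k x)} \<le> exp G * sb j" for j
    by (rule gen[OF indepU rvU bndU meanU EU2]) (simp add: U_def)
  have genU': "prob {x \<in> space M. x0 \<le> (\<Sum>k\<in>B j. - U k x)} \<le> exp G * sb j" for j
  proof (rule gen[OF indepU'])
    show "expectation (\<lambda>x. - U k x) = 0" for k using meanU[of k] by simp
    show "expectation (\<lambda>x. (- U k x)\<^sup>2) \<le> \<delta> powr (2 - q) * a k powr q * Dq" for k using EU2[of k] by simp
    show "\<bar>- U k x\<bar> \<le> 2 * \<delta>" for k x using bndU[of k x] by simp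
  qed (auto simp: U_def)
  define E where "E j = {x \<in> space M. x0 \<le> (\<Sum>k\<in>B j. U k x)} \<union> {x \<in> space M. x0 \<le> (\<Sum>k\<in>B j. - U k x)}" for j
  have Esets[measurable]: "E j \<in> sets M" for j unfolding E_def by measurable
  have Ebound: "measure M (E j) \<le> 2 * exp G * sb j" for j
  proof -
    have "measure M (E j) \<le> prob {x \<in> space M. x0 \<le> (\<Sum>k\<in>B j. U k x)} + prob {x \<in> space M. x0 \<le> (\<Sum>k\<in>B j. - U k x)}"
      unfolding E_def by (rule measure_Un_le) auto
    also have "\<dots> \<le> exp G * sb j + exp G * sb j" by (intro add_mono genU genU')
    finally show ?thesis by simp
  qed
  have sb_summ: "summable sb"
    unfolding sb_def B_def by (rule block_sums_summable[OF s _ sum]) auto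
  have Esumm: "summable (\<lambda>j. measure M (E j))"
  proof (rule summable_comparison_test')
    show "summable (\<lambda>j. 2 * exp G * sb j)" using sb_summ by (intro summable_mult)
    show "norm (measure M (E j)) \<le> 2 * exp G * sb j" for j using Ebound[of j] by simp
  qed
  have BC: "AE x in M. eventually (\<lambda>j. x \<in> space M - E j) sequentially"
    by (rule borel_cantelli_AE1) (use Esumm in \<open>auto simp: emeasure_eq_measure\<close>)
  have AE1: "AE x in M. eventually (\<lambda>j. \<forall>k\<in>B j. a k * \<bar>V k x\<bar> \<le> \<delta>) sequentially"
  proof -
    have "AE x in M. eventually (\<lambda>k. a k * \<bar>V k x\<bar> \<le> \<delta>) sequentially"
      using p by (intro trunc_ev[where V=V and a=a, OF rv ident _ intp a0 sum \<delta>0]) auto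
    then show ?thesis
      unfolding B_def by (rule AE_mp[OF _ AE_I2]) (auto intro: eventually_blocks[OF s])
  qed
  from AE1 BC show ?thesis
  proof eventually_elim
    case (elim x)
    from elim(1) elim(2) bias_ev show ?case
    proof eventually_elim
      case (elim j)
      have TV: "T k x = V k x" if "k \<in> B j" for k using elim(1) that by (simp add: T_def)
      have "(\<Sum>k\<in>B j. a k * V k x) = (\<Sum>k\<in>B j. U k x + a k * b k)"
        by (intro sum.cong refl) (simp add: TV U_def algebra_simps)
      also have "\<dots> = (\<Sum>k\<in>B j. U k x) + (\<Sum>k\<in>B j. a k * b k)" by (rule sum.distrib)
      finally have eq: "(\<Sum>k\<in>B j. a k * V k x) = (\<Sum>k\<in>B j. U k x) + (\<Sum>k\<in>B j. a k * b k)" .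
      have nE: "x \<notin> E j" using elim(2) by simp
      have xs: "x \<in> space M" using elim(2) by simp
      have "\<not> x0 \<le> (\<Sum>k\<in>B j. U k x)" "\<not> x0 \<le> (\<Sum>k\<in>B j. - U k x)" using nE xs unfolding E_def by auto
      then have "\<bar>\<Sum>k\<in>B j. U k x\<bar> < x0" by (simp add: sum_negf)
      then have "\<bar>\<Sum>k\<in>B j. a k * V k x\<bar> \<le> 2 * x0" using eq elim(3) by linarith
      then show ?case unfolding B_def x0_def by simp
    qed
  qed
qed

end

lemma powr_sum_bound:
  fixes u w p :: real
  assumes "0 \<le> p"
  shows "\<bar>u + w\<bar> powr p \<le> 2 powr p * (\<bar>u\<bar> powr p + \<bar>w\<bar> powr p)"
proof -
  have "\<bar>u + w\<bar> \<le> 2 * max \<bar>u\<bar> \<bar>w\<bar>" by linarith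
  then have "\<bar>u + w\<bar> powr p \<le> (2 * max \<bar>u\<bar> \<bar>w\<bar>) powr p" using assms by (intro powr_mono2) auto
  also have "\<dots> = 2 powr p * max \<bar>u\<bar> \<bar>w\<bar> powr p" by (simp add: powr_mult)
  also have "max \<bar>u\<bar> \<bar>w\<bar> powr p \<le> \<bar>u\<bar> powr p + \<bar>w\<bar> powr p" by (simp add: max_def)
  finally show ?thesis by (simp add: mult_left_mono)
qed

context prob_space
begin

lemma ident_compose:
  fixes V :: "nat \<Rightarrow> 'a \<Rightarrow> real" and g :: "real \<Rightarrow> real"
  assumes rv: "\<And>k. V k \<in> borel_measurable M"
    and ident: "\<And>k. distr M borel (V k) = distr M borel (V 0)"
    and g: "g \<in> borel_measurable borel"
  shows "distr M borel (\<lambda>x. g (V k x)) = distr M borel (\<lambda>x. g (V 0 x))"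
proof -
  have "distr M borel (\<lambda>x. g (V i x)) = distr (distr M borel (V i)) borel g" for i
    using rv g by (subst distr_distr) (auto simp: comp_def)
  then show ?thesis using ident[of k] by simp
qed

lemma integrable_shift_powr:
  fixes f :: "'a \<Rightarrow> real"
  assumes f[measurable]: "f \<in> borel_measurable M" and i: "integrable M (\<lambda>x. \<bar>f x\<bar> powr p)" and p: "0 \<le> p"
  shows "integrable M (\<lambda>x. \<bar>f x + c\<bar> powr p)"
proof (rule Bochner_Integration.integrable_bound)
  show "integrable M (\<lambda>x. 2 powr p * (\<bar>f x\<bar> powr p + \<bar>c\<bar> powr p))" using i by simp
  show "AE x in M. norm (\<bar>f x + c\<bar> powr p) \<le> norm (2 powr p * (\<bar>f x\<bar> powr p + \<bar>c\<bar> powr p))"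
    using p by (intro AE_I2) (simp add: powr_sum_bound)
qed measurable


lemma sa_main:
  fixes Z :: "nat \<Rightarrow> 'a \<Rightarrow> real" and \<mu> p :: real and a :: "nat \<Rightarrow> real"
  assumes rv[measurable]: "\<And>n. Z n \<in> borel_measurable M"
    and indep: "indep_vars (\<lambda>_. borel) Z UNIV"
    and ident: "\<And>n. distr M borel (Z n) = distr M borel (Z 0)"
    and p: "p > 1"
    and intp: "integrable M (\<lambda>x. \<bar>Z 0 x\<bar> powr p)"
    and int0: "integrable M (Z 0)"
    and mu: "(\<integral>x. Z 0 x \<partial>M) = \<mu>"
    and apos: "\<forall>n\<ge>1. a n > 0"
    and nsum: "\<not> summable (\<lambda>n. a (Suc n))"
    and sum: "summable (\<lambda>n. a (Suc n) powr p)"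
  shows "AE x in M. (\<lambda>n. sa_iter a Z n x) \<longlonglongrightarrow> \<mu>"
proof -
  define Y where "Y k x = Z k x - \<mu>" for k x
  have rvY[measurable]: "Y k \<in> borel_measurable M" for k unfolding Y_def by measurable
  have indepY: "indep_vars (\<lambda>_. borel) Y UNIV"
    unfolding Y_def by (rule indep_vars_compose2[OF indep, where Y="\<lambda>_ v. v - \<mu>", simplified]) auto
  have identY: "distr M borel (Y k) = distr M borel (Y 0)" for k
    unfolding Y_def using ident_compose[where V=Z, OF rv ident, of "\<lambda>v. v - \<mu>" k] by simp
  have intpY: "integrable M (\<lambda>x. \<bar>Y 0 x\<bar> powr p)"
    unfolding Y_def using integrable_shift_powr[OF rv intp, of "- \<mu>"] p by simp
  have int0Y: "integrable M (Y 0)" unfolding Y_def using int0 by simp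
  have meanY: "expectation (Y 0) = 0" unfolding Y_def using int0 mu by (simp add: prob_space)
  define c where "c = expectation (\<lambda>x. \<bar>Y 0 x\<bar>)"
  have c0: "0 \<le> c" unfolding c_def by (intro integral_nonneg_AE) auto
  define W where "W k x = \<bar>Y k x\<bar> - c" for k x
  have rvW[measurable]: "W k \<in> borel_measurable M" for k unfolding W_def by measurable
  have indepW: "indep_vars (\<lambda>_. borel) W UNIV"
    unfolding W_def by (rule indep_vars_compose2[OF indepY, where Y="\<lambda>_ v. \<bar>v\<bar> - c", simplified]) auto
  have identW: "distr M borel (W k) = distr M borel (W 0)" for k
    unfolding W_def using ident_compose[where V=Y, OF rvY identY, of "\<lambda>v. \<bar>v\<bar> - c" k] by simp
  have intpW: "integrable M (\<lambda>x. \<bar>W 0 x\<bar> powr p)"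
  proof -
    have "integrable M (\<lambda>x. \<bar>\<bar>Y 0 x\<bar>\<bar> powr p)" using intpY by simp
    then have "integrable M (\<lambda>x. \<bar>\<bar>Y 0 x\<bar> + - c\<bar> powr p)"
      using p by (intro integrable_shift_powr) auto
    then show ?thesis unfolding W_def by simp
  qed
  have int0W: "integrable M (W 0)" unfolding W_def using int0Y by simp
  have meanW: "expectation (W 0) = 0" unfolding W_def c_def using int0Y by (simp add: prob_space)
  define C where "C = 2 * c + 1"
  have C0: "0 \<le> C" unfolding C_def using c0 by simp
  have sumall: "summable (\<lambda>k. a k powr p)" using sum summable_Suc_iff[of "\<lambda>k. a k powr p"] by simp
  have nsumall: "\<not> summable a" using nsum summable_Suc_iff[of a] by simp
  have lim0: "(\<lambda>n. a (Suc n) powr p) \<longlonglongrightarrow> 0" by (rule summable_LIMSEQ_zero[OF sum])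
  have key: "AE x in M. eventually (\<lambda>n. \<bar>sa_iter a Z n x - \<mu>\<bar> \<le> (6 + 14 * C) * (1 / (real m + 8))) sequentially" for m
  proof -
    define \<eta> where "\<eta> = 1 / (real m + 8)"
    have \<eta>0: "0 < \<eta>" and \<eta>8: "\<eta> \<le> 1/8" unfolding \<eta>_def by (auto simp: field_simps)
    have "eventually (\<lambda>n. a (Suc n) powr p < \<eta> powr p) sequentially"
      using lim0 \<eta>0 by (intro order_tendstoD) auto
    then obtain N0 where N0: "\<And>n. n \<ge> N0 \<Longrightarrow> a (Suc n) powr p < \<eta> powr p"
      unfolding eventually_sequentially by blast
    define N where "N = Suc N0"
    have N1: "1 \<le> N" unfolding N_def by simp
    have aN: "a k \<le> \<eta>" if Nk: "N \<le> k" for k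
    proof (rule ccontr)
      assume "\<not> a k \<le> \<eta>"
      then have "\<eta> powr p \<le> a k powr p" using \<eta>0 p by (intro powr_mono2) auto
      moreover obtain n where "k = Suc n" "n \<ge> N0" using Nk unfolding N_def by (cases k) auto
      ultimately show False using N0 by force
    qed
    have aN0: "0 \<le> a k" if "N \<le> k" for k
      using apos that N1 by (metis le_trans less_imp_le)
    obtain s where s: "strict_mono s" "s 0 = N"
      and sm: "\<And>j. \<eta> \<le> (\<Sum>k\<in>{s j..<s (Suc j)}. a k) \<and> (\<Sum>k\<in>{s j..<s (Suc j)}. a k) \<le> 2 * \<eta>"
      using block_seq[of N a \<eta>, OF aN0 aN \<eta>0 nsumall] by blast
    have sN: "N \<le> s j" for j using s by (metis strict_mono_less_eq zero_le)
    define a' where "a' k = (if N \<le> k then a k else 0)" for k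
    have a'0: "0 \<le> a' k" for k unfolding a'_def using aN0 by auto
    have a'1: "a' k \<le> 1" for k
    proof (cases "N \<le> k")
      case True then have "a k \<le> \<eta>" by (rule aN)
      then show ?thesis using True \<eta>8 unfolding a'_def by simp
    qed (simp add: a'_def)
    have a'sum: "summable (\<lambda>k. a' k powr p)"
    proof (rule summable_comparison_test'[OF sumall])
      show "norm (a' k powr p) \<le> a k powr p" for k unfolding a'_def by simp
    qed
    have blk: "(\<Sum>k\<in>{s j..<s (Suc j)}. a' k * f k) = (\<Sum>k\<in>{s j..<s (Suc j)}. a k * f k)" for j f
      using sN[of j] by (intro sum.cong refl) (auto simp: a'_def)
    have mass': "(\<Sum>k\<in>{s j..<s (Suc j)}. a' k) \<le> 1" for j
      using blk[of "\<lambda>_. 1" j] sm[of j] \<eta>8 by simp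
    have \<eta>\<eta>: "0 < \<eta> * \<eta>" using \<eta>0 by simp
    have AY: "AE x in M. eventually (\<lambda>j. \<bar>\<Sum>k\<in>{s j..<s (Suc j)}. a' k * Y k x\<bar> \<le> \<eta> * \<eta>) sequentially"
      by (rule block_sums_small[OF rvY indepY identY p intpY int0Y meanY a'0 a'1 a'sum s(1) mass' \<eta>\<eta>])
    have AW: "AE x in M. eventually (\<lambda>j. \<bar>\<Sum>k\<in>{s j..<s (Suc j)}. a' k * W k x\<bar> \<le> \<eta> * \<eta>) sequentially"
      by (rule block_sums_small[OF rvW indepW identW p intpW int0W meanW a'0 a'1 a'sum s(1) mass' \<eta>\<eta>])
    from AY AW show ?thesis
    proof eventually_elim
      case (elim x)
      define e where "e n = sa_iter a Z n x - \<mu>" for n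
      define y where "y k = Y k x" for k
      have rec: "e (Suc k) = (1 - a k) * e k + a k * y k" if "s 0 \<le> k" for k
      proof -
        have "k \<noteq> 0" using that s(2) N1 by simp
        then show ?thesis unfolding e_def y_def Y_def by (simp add: algebra_simps)
      qed
      have S: "eventually (\<lambda>j. \<bar>\<Sum>k\<in>{s j..<s (Suc j)}. a k * y k\<bar> \<le> \<eta> * \<eta>) sequentially"
        using elim(1) unfolding y_def blk .
      have T: "eventually (\<lambda>j. (\<Sum>k\<in>{s j..<s (Suc j)}. a k * \<bar>y k\<bar>) \<le> C * \<eta>) sequentially"
        using elim(2)
      proof eventually_elim
        case (elim j)
        have "(\<Sum>k\<in>{s j..<s (Suc j)}. a k * \<bar>y k\<bar>) = (\<Sum>k\<in>{s j..<s (Suc j)}. a k * W k x) + c * (\<Sum>k\<in>{s j..<s (Suc j)}. a k)"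
          unfolding y_def W_def by (simp add: algebra_simps sum.distrib sum_distrib_left sum_subtractf)
        also have "\<dots> \<le> \<eta> * \<eta> + c * (2 * \<eta>)"
          using elim blk[of "\<lambda>k. W k x" j] sm[of j] c0 by (intro add_mono mult_left_mono) auto
        also have "\<dots> \<le> C * \<eta>"
        proof -
          have "\<eta> * \<eta> \<le> 1 * \<eta>" using \<eta>0 \<eta>8 by (intro mult_right_mono) auto
          then show ?thesis unfolding C_def by (simp add: algebra_simps)
        qed
        finally show ?case .
      qed
      have "eventually (\<lambda>n. \<bar>e n\<bar> \<le> (6 + 14 * C) * \<eta>) sequentially"
        by (rule det_conv[OF s(1) rec _ _ _ \<eta>0 \<eta>8 C0 S T]) (use sm aN0 s(2) in auto)
      then show ?case unfolding e_def \<eta>_def .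
    qed
  qed
  have "AE x in M. \<forall>m. eventually (\<lambda>n. \<bar>sa_iter a Z n x - \<mu>\<bar> \<le> (6 + 14 * C) * (1 / (real m + 8))) sequentially"
    using key by (simp add: AE_all_countable)
  then show ?thesis
  proof eventually_elim
    case (elim x)
    show ?case
    proof (rule LIMSEQ_I)
      fix r :: real assume r: "0 < r"
      obtain m :: nat where m: "(6 + 14 * C) / r < real m" using reals_Archimedean2 by blast
      have "(6 + 14 * C) * (1 / (real m + 8)) < r"
      proof -
        have "(6 + 14 * C) < r * real m" using m r by (simp add: field_simps)
        also have "\<dots> < r * (real m + 8)" using r by simp
        finally show ?thesis by (simp add: field_simps)
      qed
      with elim[rule_format, of m] have "eventually (\<lambda>n. \<bar>sa_iter a Z n x - \<mu>\<bar> < r) sequentially"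
        by (auto elim: eventually_mono)
      then show "\<exists>no. \<forall>n\<ge>no. norm (sa_iter a Z n x - \<mu>) < r"
        unfolding eventually_sequentially by simp
    qed
  qed
qed

end


lemma step_hyps:
  fixes \<alpha> K \<xi> p :: real
  assumes \<alpha>: "\<alpha> > 0" and K: "K > 0" and \<xi>1: "1 / p < \<xi>" and \<xi>2: "\<xi> \<le> 1" and p: "p > 1"
  defines "a \<equiv> (\<lambda>n. \<alpha> * (real n + K) powr (- \<xi>))"
  shows "(\<forall>n\<ge>1. a n > 0) \<and> \<not> summable (\<lambda>n. a (Suc n)) \<and> summable (\<lambda>n. a (Suc n) powr p)"
proof (intro conjI)
  show "\<forall>n\<ge>1. a n > 0" unfolding a_def using \<alpha> K by auto
  show "\<not> summable (\<lambda>n. a (Suc n))"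
  proof
    assume "summable (\<lambda>n. a (Suc n))"
    then have sa: "summable a" using summable_Suc_iff[of a] by simp
    have "summable (\<lambda>n. inverse (of_nat n) :: real)"
    proof (rule summable_comparison_test'[where N=1])
      show "summable (\<lambda>n. (1 + K) / \<alpha> * a n)" using sa by (rule summable_mult)
      fix n :: nat assume n: "1 \<le> n"
      have nK: "1 \<le> real n + K" using n K by simp
      have "inverse (real n) \<le> (1 + K) * inverse (real n + K)"
      proof -
        have "real n + K \<le> (1 + K) * real n" using n K by (simp add: algebra_simps)
        then show ?thesis using n K by (simp add: field_simps)
      qed
      also have "inverse (real n + K) = (real n + K) powr (-1)" using nK by (simp add: powr_minus)
      also have "\<dots> \<le> (real n + K) powr (- \<xi>)" using \<xi>2 nK by (intro powr_mono) auto
      finally have "inverse (real n) \<le> (1 + K) * (real n + K) powr (- \<xi>)" using K by (simp add: mult_left_mono)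
      moreover have "(1 + K) / \<alpha> * a n = (1 + K) * (real n + K) powr (- \<xi>)"
        unfolding a_def using \<alpha> by simp
      ultimately show "norm (inverse (of_nat n) :: real) \<le> (1 + K) / \<alpha> * a n"
        by simp
    qed
    then show False using not_summable_harmonic by blast
  qed
  show "summable (\<lambda>n. a (Suc n) powr p)"
  proof (rule summable_comparison_test')
    have "summable (\<lambda>n. real n powr (- (\<xi> * p)))"
      using \<xi>1 p by (subst summable_real_powr_iff) (simp add: field_simps)
    then have "summable (\<lambda>n. real (Suc n) powr (- (\<xi> * p)))"
      using summable_Suc_iff[of "\<lambda>n. real n powr (- (\<xi> * p))"] by simp
    then show "summable (\<lambda>n. \<alpha> powr p * real (Suc n) powr (- (\<xi> * p)))" by (rule summable_mult)
    fix n
    have b0: "0 < real (Suc n) + K" using K by simp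
    have "a (Suc n) powr p = \<alpha> powr p * ((real (Suc n) + K) powr (- \<xi>)) powr p"
      unfolding a_def using \<alpha> by (simp add: powr_mult)
    also have "((real (Suc n) + K) powr (- \<xi>)) powr p = (real (Suc n) + K) powr (- (\<xi> * p))"
      by (simp add: powr_powr)
    also have "\<dots> \<le> real (Suc n) powr (- (\<xi> * p))"
      using K \<xi>1 p by (intro powr_mono2') (auto simp: field_simps)
    finally show "norm (a (Suc n) powr p) \<le> \<alpha> powr p * real (Suc n) powr (- (\<xi> * p))"
      using \<alpha> by (simp add: mult_left_mono)
  qed
qed

theorem corollary7:
  fixes M :: "'a measure" and Z :: "nat \<Rightarrow> 'a \<Rightarrow> real" and \<mu> p :: real
  assumes "prob_space M"
    and "\<And>n. Z n \<in> borel_measurable M"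
    and "prob_space.indep_vars M (\<lambda>_. borel) Z UNIV"
    and "\<And>n. distr M borel (Z n) = distr M borel (Z 0)"
    and "p > 1"
    and "integrable M (\<lambda>x. \<bar>Z 0 x\<bar> powr p)"
    and "integrable M (Z 0)"
    and "(\<integral>x. Z 0 x \<partial>M) = \<mu>"
  shows "(\<forall>a :: nat \<Rightarrow> real.
            (\<forall>n\<ge>1. a n > 0) \<and> (\<forall>n\<ge>1. a (Suc n) \<le> a n) \<and>
            \<not> summable (\<lambda>n. a (Suc n)) \<and> summable (\<lambda>n. a (Suc n) powr p)
            \<longrightarrow> (AE x in M. (\<lambda>n. sa_iter a Z n x) \<longlonglongrightarrow> \<mu>))
       \<and> (\<forall>\<alpha> K \<xi> :: real. \<alpha> > 0 \<and> K > 0 \<and> 1 / p < \<xi> \<and> \<xi> \<le> 1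
            \<longrightarrow> (AE x in M. (\<lambda>n. sa_iter (\<lambda>n. \<alpha> * (real n + K) powr (- \<xi>)) Z n x)
                               \<longlonglongrightarrow> \<mu>))"
proof -
  interpret prob_space M by fact
  have main: "AE x in M. (\<lambda>n. sa_iter a Z n x) \<longlonglongrightarrow> \<mu>"
    if "\<forall>n\<ge>1. a n > 0" "\<not> summable (\<lambda>n. a (Suc n))" "summable (\<lambda>n. a (Suc n) powr p)" for a
    by (rule sa_main[OF assms(2,3,4,5,6,7,8) that])
  show ?thesis
  proof (intro conjI allI impI)
    fix a :: "nat \<Rightarrow> real"
    assume "(\<forall>n\<ge>1. a n > 0) \<and> (\<forall>n\<ge>1. a (Suc n) \<le> a n) \<and>
            \<not> summable (\<lambda>n. a (Suc n)) \<and> summable (\<lambda>n. a (Suc n) powr p)"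
    then have h1: "\<forall>n\<ge>1. a n > 0" and h2: "\<not> summable (\<lambda>n. a (Suc n))"
      and h3: "summable (\<lambda>n. a (Suc n) powr p)" by auto
    show "AE x in M. (\<lambda>n. sa_iter a Z n x) \<longlonglongrightarrow> \<mu>" by (rule main[OF h1 h2 h3])
  next
    fix \<alpha> K \<xi> :: real
    assume h: "\<alpha> > 0 \<and> K > 0 \<and> 1 / p < \<xi> \<and> \<xi> \<le> 1"
    define b where "b = (\<lambda>n. \<alpha> * (real n + K) powr (- \<xi>))"
    have H: "(\<forall>n\<ge>1. b n > 0) \<and> \<not> summable (\<lambda>n. b (Suc n)) \<and> summable (\<lambda>n. b (Suc n) powr p)"
      unfolding b_def using h assms(5) by (intro step_hyps) auto
    then have h1: "\<forall>n\<ge>1. b n > 0" and h2: "\<not> summable (\<lambda>n. b (Suc n))"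
      and h3: "summable (\<lambda>n. b (Suc n) powr p)" by auto
    have "AE x in M. (\<lambda>n. sa_iter b Z n x) \<longlonglongrightarrow> \<mu>" by (rule main[OF h1 h2 h3])
    then show "AE x in M. (\<lambda>n. sa_iter (\<lambda>n. \<alpha> * (real n + K) powr (- \<xi>)) Z n x) \<longlonglongrightarrow> \<mu>"
      unfolding b_def .
  qed
qed

end
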